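(* Let $p(\cdot)$ be a probability measure on the nonnegative integers with $p(i)>0$ for all $i$, and let $a>0$ be the parameter of the penalty $L_a$ to be minimized. Suppose there is a nonnegative integer $r$ such that for all $j>r$ and all $i<j$, $$p(i)\ge p(j)\qquad\text{and}\qquad p(i)\ge \sum_{k=j+1}^\infty p(k)\,a^{k-j}.$$ Then there exists a minimum-penalty binary prefix code in which, for some fixed nonnegative integer $x$, every codeword $j>r$ consists of $j-x$ ones followed by one zero.
   Context: A binary prefix code for the nonnegative integers assigns to each $i\ge 0$ a codeword $c(i)\in\{0,1\}^*$ such that no codeword is a prefix of another; $n(i)$ is the length of $c(i)$ and $N=\{n(i)\}$. For $a>0$, $a\ne 1$, the penalty is $L_a(P,N)=\log_a\sum_{i\ge 0}p(i)a^{n(i)}$ (for $a=1$, the expected length $\sum_i p(i)n(i)$). A minimum-penalty code is one whose lengths minimize $L_a(P,N)$ over all binary prefix codes. *)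

theory Defs
  imports "HOL-Analysis.Analysis" "HOL-Library.Sublist"
begin

text \<open>A binary prefix code for the nonnegative integers: codewords are lists of
booleans (True = 1, False = 0) and no codeword is a prefix of another one.\<close>
definition prefix_code :: "(nat \<Rightarrow> bool list) \<Rightarrow> bool" where
  "prefix_code c \<longleftrightarrow> (\<forall>i j. i \<noteq> j \<longrightarrow> \<not> prefix (c i) (c j))"

text \<open>The penalty L_a(P,N), valued in the extended reals (the defining series may
diverge, in which case the penalty is +infinity).\<close>
definition penalty :: "real \<Rightarrow> (nat \<Rightarrow> real) \<Rightarrow> (nat \<Rightarrow> bool list) \<Rightarrow> ereal" where
  "penalty a p c =
     (if a = 1 then enn2ereal (\<Sum>i. ennreal (p i * real (length (c i))))
      else (let S = (\<Sum>i. ennreal (p i * a ^ length (c i)))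
            in if S = \<infinity> then \<infinity> else ereal (log a (enn2real S))))"

definition min_penalty_code :: "real \<Rightarrow> (nat \<Rightarrow> real) \<Rightarrow> (nat \<Rightarrow> bool list) \<Rightarrow> bool" where
  "min_penalty_code a p c \<longleftrightarrow>
     prefix_code c \<and> (\<forall>c'. prefix_code c' \<longrightarrow> penalty a p c \<le> penalty a p c')"

end

theory Submission
  imports Defs
begin

definition pf :: "nat set \<Rightarrow> (nat \<Rightarrow> bool list) \<Rightarrow> bool" where
  "pf A c \<longleftrightarrow> (\<forall>i\<in>A. \<forall>k\<in>A. i \<noteq> k \<longrightarrow> \<not> prefix (c i) (c k))"

lemma prefix_nth_iff:
  "prefix xs ys \<longleftrightarrow> length xs \<le> length ys \<and> (\<forall>k<length xs. xs ! k = ys ! k)"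
proof
  assume "prefix xs ys" then show "length xs \<le> length ys \<and> (\<forall>k<length xs. xs ! k = ys ! k)"
    by (auto simp: prefix_def nth_append)
next
  assume H: "length xs \<le> length ys \<and> (\<forall>k<length xs. xs ! k = ys ! k)"
  have "take (length xs) ys = xs"
    by (rule nth_equalityI) (use H in auto)
  then show "prefix xs ys" by (metis take_is_prefix)
qed

definition flipv :: "bool list \<Rightarrow> bool list \<Rightarrow> bool list" where
  "flipv v w = map (\<lambda>k. if k < length v then (w ! k = v ! k) else w ! k) [0..<length w]"

lemma flipv_length [simp]: "length (flipv v w) = length w"
  by (simp add: flipv_def)

lemma flipv_nth: "k < length w \<Longrightarrow> flipv v w ! k = (if k < length v then (w ! k = v ! k) else w ! k)"
  by (simp add: flipv_def)

lemma flipv_self: "flipv v v = replicate (length v) True"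
  by (rule nth_equalityI) (auto simp: flipv_nth)

lemma flipv_prefix: "prefix (flipv v x) (flipv v y) \<longleftrightarrow> prefix x y"
proof -
  have "(\<forall>k<length x. flipv v x ! k = flipv v y ! k) \<longleftrightarrow> (\<forall>k<length x. x ! k = y ! k)"
    if "length x \<le> length y"
  proof -
    have "flipv v x ! k = flipv v y ! k \<longleftrightarrow> x ! k = y ! k" if "k < length x" for k
      using that \<open>length x \<le> length y\<close> by (simp add: flipv_nth) blast
    then show ?thesis by blast
  qed
  then show ?thesis unfolding prefix_nth_iff by auto
qed

lemma pf_flip: "pf A c \<Longrightarrow> pf A (\<lambda>i. flipv v (c i))"
  by (simp add: pf_def flipv_prefix)

lemma pf_swap: "pf A c \<Longrightarrow> i \<in> A \<Longrightarrow> k \<in> A \<Longrightarrow> pf A (c(i := c k, k := c i))"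
  unfolding pf_def by (metis fun_upd_other fun_upd_same)

lemma pf_subset: "pf A c \<Longrightarrow> B \<subseteq> A \<Longrightarrow> pf B c"
  unfolding pf_def by blast

lemma pf_cong: "pf A c \<Longrightarrow> (\<And>i. i \<in> A \<Longrightarrow> c' i = c i) \<Longrightarrow> pf A c'"
  unfolding pf_def by simp

definition delop :: "bool list \<Rightarrow> bool \<Rightarrow> bool list \<Rightarrow> bool list" where
  "delop s b x = (if prefix (s @ [b]) x then s @ drop (Suc (length s)) x else x)"

lemma delop_length: "length (delop s b x) \<le> length x"
  by (auto simp: delop_def dest: prefix_length_le)

lemma delop_length_less: "prefix (s @ [b]) x \<Longrightarrow> length (delop s b x) < length x"
  by (auto simp: delop_def dest: prefix_length_le)

lemma prefix_snoc_cases: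
  assumes "prefix s y" "y \<noteq> s"
  shows "prefix (s @ [True]) y \<or> prefix (s @ [False]) y"
proof -
  obtain z where y: "y = s @ z" using assms(1) prefixE by blast
  with assms(2) obtain e z' where "z = e # z'" by (cases z) auto
  then show ?thesis using y by (cases e) auto
qed

lemma delop_pf:
  assumes pf: "pf A c" and empty: "\<forall>t\<in>A. \<not> prefix (s @ [\<not> b]) (c t)"
  shows "pf A (\<lambda>t. delop s b (c t))"
  unfolding pf_def
proof (intro ballI impI notI)
  fix t1 t2 assume t: "t1 \<in> A" "t2 \<in> A" "t1 \<noteq> t2"
    and P: "prefix (delop s b (c t1)) (delop s b (c t2))"
  have np: "\<not> prefix (c t1) (c t2)" "\<not> prefix (c t2) (c t1)" using pf t unfolding pf_def by auto
  have e1: "\<not> prefix (s @ [\<not> b]) (c t1)" and e2: "\<not> prefix (s @ [\<not> b]) (c t2)"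
    using empty t by auto
  show False
  proof (cases "prefix (s @ [b]) (c t1)")
    case True1: True
    then obtain x1 where x1: "c t1 = s @ [b] @ x1" by (auto simp: prefix_def)
    show False
    proof (cases "prefix (s @ [b]) (c t2)")
      case True
      then obtain x2 where x2: "c t2 = s @ [b] @ x2" by (auto simp: prefix_def)
      from P have "prefix x1 x2" using x1 x2 by (simp add: delop_def)
      then show False using np x1 x2 by simp
    next
      case False
      from P have P': "prefix (s @ x1) (c t2)" using x1 False by (simp add: delop_def)
      then have "prefix s (c t2)" using append_prefixD by blast
      moreover have "c t2 \<noteq> s" using np(2) x1 by auto
      ultimately have "prefix (s @ [True]) (c t2) \<or> prefix (s @ [False]) (c t2)"
        using prefix_snoc_cases by blast
      then show False using False e2 by (cases b) auto
    qed
  next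
    case False1: False
    show False
    proof (cases "prefix (s @ [b]) (c t2)")
      case True
      then obtain x2 where x2: "c t2 = s @ [b] @ x2" by (auto simp: prefix_def)
      from P have P': "prefix (c t1) (s @ x2)" using x2 False1 by (simp add: delop_def)
      show False
      proof (cases "prefix (c t1) s")
        case True
        have "prefix s (c t2)" using x2 by simp
        then show False using np prefix_order.trans[OF True] by blast
      next
        case False
        have "prefix s (s @ x2)" by simp
        then have "prefix s (c t1)" using P' prefix_same_cases False by blast
        then have "prefix (s @ [True]) (c t1) \<or> prefix (s @ [False]) (c t1)"
          using prefix_snoc_cases False by blast
        then show False using False1 e1 by (cases b) auto
      qed
    next
      case False
      then show False using P False1 np by (simp add: delop_def)
    qed
  qed
qed

definition gcost :: "(nat \<Rightarrow> real) \<Rightarrow> (nat \<Rightarrow> real) \<Rightarrow> (nat \<Rightarrow> real) \<Rightarrow> nat set \<Rightarrow> (nat \<Rightarrow> bool list) \<Rightarrow> real" where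
  "gcost w kk \<phi> A c = (\<Sum>t\<in>A. w t * \<phi> (length (c t)) + kk t)"

lemma sum_two_changed:
  fixes F :: "nat \<Rightarrow> 'b \<Rightarrow> real"
  assumes "finite A" "i \<in> A" "k \<in> A" "i \<noteq> k" "\<And>t. t \<in> A \<Longrightarrow> t \<noteq> i \<Longrightarrow> t \<noteq> k \<Longrightarrow> c' t = c t"
  shows "(\<Sum>t\<in>A. F t (c' t)) = (\<Sum>t\<in>A. F t (c t)) - F i (c i) - F k (c k) + F i (c' i) + F k (c' k)"
proof -
  have kA: "k \<in> A - {i}" using assms by auto
  have gen: "(\<Sum>t\<in>A. G t) = G i + (G k + (\<Sum>t\<in>A - {i} - {k}. G t))" for G :: "nat \<Rightarrow> real"
    using sum.remove[OF assms(1) assms(2), of G] sum.remove[of "A - {i}" k G] assms(1) kA by simp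
  have "(\<Sum>t\<in>A - {i} - {k}. F t (c' t)) = (\<Sum>t\<in>A - {i} - {k}. F t (c t))"
    using assms(5) by (intro sum.cong) auto
  then show ?thesis using gen[of "\<lambda>t. F t (c' t)"] gen[of "\<lambda>t. F t (c t)"] by simp
qed

lemma sum_one_changed:
  fixes F :: "nat \<Rightarrow> 'b \<Rightarrow> real"
  assumes "finite A" "i \<in> A" "\<And>t. t \<in> A \<Longrightarrow> t \<noteq> i \<Longrightarrow> c' t = c t"
  shows "(\<Sum>t\<in>A. F t (c' t)) = (\<Sum>t\<in>A. F t (c t)) - F i (c i) + F i (c' i)"
proof -
  have "(\<Sum>t\<in>A. F t (c' t)) = F i (c' i) + (\<Sum>t\<in>A - {i}. F t (c' t))"
    using sum.remove[OF assms(1) assms(2)] by auto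
  moreover have "(\<Sum>t\<in>A. F t (c t)) = F i (c i) + (\<Sum>t\<in>A - {i}. F t (c t))"
    using sum.remove[OF assms(1) assms(2)] by auto
  moreover have "(\<Sum>t\<in>A - {i}. F t (c' t)) = (\<Sum>t\<in>A - {i}. F t (c t))"
    using assms(3) by (intro sum.cong) auto
  ultimately show ?thesis by simp
qed

lemma gcost_swap:
  assumes "finite A" "i \<in> A" "k \<in> A" "i \<noteq> k"
  shows "gcost w kk \<phi> A (c(i := c k, k := c i)) =
    gcost w kk \<phi> A c + (w i - w k) * (\<phi> (length (c k)) - \<phi> (length (c i)))"
  unfolding gcost_def
  using sum_two_changed[where c'="c(i := c k, k := c i)" and c=c and F="\<lambda>t x. w t * \<phi> (length x) + kk t", OF assms]
    assms(4) by (simp add: algebra_simps)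

lemma len_swap:
  fixes c :: "nat \<Rightarrow> 'b list"
  assumes "finite A" "i \<in> A" "k \<in> A"
  shows "(\<Sum>t\<in>A. length ((c(i := c k, k := c i)) t)) = (\<Sum>t\<in>A. length (c t))"
proof (cases "i = k")
  case True then show ?thesis by simp
next
  case False
  have "(\<Sum>t\<in>A. real (length ((c(i := c k, k := c i)) t))) = (\<Sum>t\<in>A. real (length (c t)))"
    using sum_two_changed[where c'="c(i := c k, k := c i)" and c=c and F="\<lambda>t x. real (length x)", OF assms False] False
    by simp
  then show ?thesis by (metis of_nat_eq_iff of_nat_sum)
qed

lemma gcost_mono:
  assumes "mono \<phi>" "\<And>t. t \<in> A \<Longrightarrow> 0 \<le> w t" "\<And>t. t \<in> A \<Longrightarrow> length (c' t) \<le> length (c t)"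
  shows "gcost w kk \<phi> A c' \<le> gcost w kk \<phi> A c"
  unfolding gcost_def
proof (rule sum_mono)
  fix t assume "t \<in> A"
  then have "\<phi> (length (c' t)) \<le> \<phi> (length (c t))" using assms(1,3) by (simp add: monoD)
  then show "w t * \<phi> (length (c' t)) + kk t \<le> w t * \<phi> (length (c t)) + kk t"
    using assms(2)[OF \<open>t \<in> A\<close>] by (simp add: mult_left_mono)
qed

lemma gcost_cong:
  assumes "\<And>t. t \<in> A \<Longrightarrow> c' t = c t"
  shows "gcost w kk \<phi> A c' = gcost w kk \<phi> A c"
  unfolding gcost_def using assms by (intro sum.cong) auto

lemma prefix_eq_len: "prefix x y \<Longrightarrow> length y \<le> length x \<Longrightarrow> x = y"
proof -
  assume "prefix x y" "length y \<le> length x"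
  then obtain z where "y = x @ z" by (auto elim: prefixE)
  then show "x = y" using \<open>length y \<le> length x\<close> by simp
qed

lemma sibling:
  fixes w kk :: "nat \<Rightarrow> real" and \<phi> :: "nat \<Rightarrow> real" and A :: "nat set" and x y :: nat
  assumes fin: "finite A" and xA: "x \<in> A" and yA: "y \<in> A" and xy: "x \<noteq> y" and mono: "mono \<phi>"
    and wnn: "\<And>t. t \<in> A \<Longrightarrow> 0 \<le> w t"
    and wx: "\<And>t. t \<in> A \<Longrightarrow> t \<noteq> x \<Longrightarrow> t \<noteq> y \<Longrightarrow> w x \<le> w t"
    and wy: "\<And>t. t \<in> A \<Longrightarrow> t \<noteq> x \<Longrightarrow> t \<noteq> y \<Longrightarrow> w y \<le> w t"
  shows "pf A c \<Longrightarrow> \<exists>c' s b. pf A c' \<and> gcost w kk \<phi> A c' \<le> gcost w kk \<phi> A c \<and>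
            c' x = s @ [b] \<and> c' y = s @ [\<not> b]"
proof (induction "\<Sum>t\<in>A. length (c t)" arbitrary: c rule: less_induct)
  case less
  define G where "G = gcost w kk \<phi> A"
  have key: "\<exists>c' s b. pf A c' \<and> G c' \<le> G c \<and> c' x = s @ [b] \<and> c' y = s @ [\<not> b]"
    if c1: "pf A c1" "G c1 \<le> G c" "(\<Sum>t\<in>A. length (c1 t)) = (\<Sum>t\<in>A. length (c t))"
       and ab: "\<alpha> \<in> {x,y}" "\<beta> \<in> {x,y}" "\<alpha> \<noteq> \<beta>"
       and D: "\<forall>t\<in>A. length (c1 t) \<le> length (c1 \<alpha>)"
    for c1 \<alpha> \<beta>
  proof -
    have \<alpha>A: "\<alpha> \<in> A" "\<beta> \<in> A" using ab xA yA by auto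
    have "c1 \<alpha> \<noteq> []" using c1(1) \<alpha>A ab(3) unfolding pf_def by (metis Nil_prefix)
    then obtain s b0 where sb: "c1 \<alpha> = s @ [b0]" by (metis rev_exhaust)
    have fin_: "\<exists>c' s b. pf A c' \<and> G c' \<le> G c \<and> c' x = s @ [b] \<and> c' y = s @ [\<not> b]"
      if "pf A c'" "G c' \<le> G c" "c' \<alpha> = s' @ [b']" "c' \<beta> = s' @ [\<not> b']" for c' s' b'
    proof (cases "\<alpha> = x")
      case True then have "\<beta> = y" using ab by auto
      then show ?thesis using that True by blast
    next
      case False then have "\<alpha> = y" "\<beta> = x" using ab by auto
      then show ?thesis using that by (intro exI[of _ c'] exI[of _ s'] exI[of _ "\<not> b'"]) auto
    qed
    show ?thesis
    proof (cases "\<exists>t\<in>A. prefix (s @ [\<not> b0]) (c1 t)")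
      case True
      then obtain t where t: "t \<in> A" "prefix (s @ [\<not> b0]) (c1 t)" by blast
      have "length (c1 t) \<le> length (s @ [\<not> b0])" using D t(1) sb by simp
      then have ct: "c1 t = s @ [\<not> b0]" using prefix_eq_len[OF t(2)] by simp
      show ?thesis
      proof (cases "t = \<beta>")
        case True then show ?thesis using fin_[OF c1(1,2) sb] ct by simp
      next
        case False
        have "t \<noteq> \<alpha>" using ct sb by auto
        then have tn: "t \<noteq> x" "t \<noteq> y" using False ab by auto
        define c2 where "c2 = c1(t := c1 \<beta>, \<beta> := c1 t)"
        have "G c2 = G c1 + (w t - w \<beta>) * (\<phi> (length (c1 \<beta>)) - \<phi> (length (c1 t)))"
          unfolding c2_def G_def by (rule gcost_swap[OF fin t(1) \<alpha>A(2) False])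
        moreover have "w \<beta> \<le> w t" using ab wx wy t(1) tn by auto
        moreover have "length (c1 \<beta>) \<le> length (c1 t)" using D \<alpha>A(2) ct sb by auto
        then have "\<phi> (length (c1 \<beta>)) \<le> \<phi> (length (c1 t))" using mono by (simp add: monoD)
        ultimately have "G c2 \<le> G c1" by (simp add: mult_nonneg_nonpos)
        moreover have "pf A c2" unfolding c2_def by (rule pf_swap[OF c1(1) t(1) \<alpha>A(2)])
        moreover have "c2 \<alpha> = s @ [b0]" "c2 \<beta> = s @ [\<not> b0]"
          using sb ct \<open>t \<noteq> \<alpha>\<close> ab(3) unfolding c2_def by auto
        ultimately show ?thesis using fin_ c1(2) by (meson order_trans)
      qed
    next
      case False
      define c2 where "c2 = (\<lambda>t. delop s b0 (c1 t))"
      have pf2: "pf A c2" unfolding c2_def using delop_pf[OF c1(1)] False by simp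
      have len_le: "length (c2 t) \<le> length (c1 t)" for t unfolding c2_def by (rule delop_length)
      have "length (c2 \<alpha>) < length (c1 \<alpha>)" unfolding c2_def using sb by (intro delop_length_less) simp
      then have "(\<Sum>t\<in>A. length (c2 t)) < (\<Sum>t\<in>A. length (c1 t))"
        using \<alpha>A(1) fin len_le by (intro sum_strict_mono_ex1) auto
      then have lt: "(\<Sum>t\<in>A. length (c2 t)) < (\<Sum>t\<in>A. length (c t))" using c1(3) by simp
      have "G c2 \<le> G c1" unfolding G_def using mono wnn len_le by (intro gcost_mono) auto
      with less.hyps[OF lt pf2] c1(2) show ?thesis unfolding G_def by (meson order_trans)
    qed
  qed
  have ne: "A \<noteq> {}" using xA by auto
  define D where "D = Max ((\<lambda>t. length (c t)) ` A)"
  have "D \<in> (\<lambda>t. length (c t)) ` A" unfolding D_def using fin ne by (intro Max_in) auto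
  then obtain l where l: "l \<in> A" "length (c l) = D" by auto
  have Dge: "\<forall>t\<in>A. length (c t) \<le> D" unfolding D_def using fin by auto
  show ?case
  proof (cases "l = x \<or> l = y")
    case True
    then show ?thesis using key[of c l "if l = x then y else x"] less.prems Dge l xy by (auto simp: G_def)
  next
    case False
    define c1 where "c1 = c(l := c x, x := c l)"
    have "G c1 = G c + (w l - w x) * (\<phi> (length (c x)) - \<phi> (length (c l)))"
      unfolding c1_def G_def by (rule gcost_swap[OF fin l(1) xA]) (use False in auto)
    moreover have "w x \<le> w l" using wx l(1) False by auto
    moreover have "\<phi> (length (c x)) \<le> \<phi> (length (c l))" using Dge xA l(2) mono by (simp add: monoD)
    ultimately have "G c1 \<le> G c" by (simp add: mult_nonneg_nonpos)
    moreover have "pf A c1" unfolding c1_def by (rule pf_swap[OF less.prems l(1) xA])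
    moreover have "(\<Sum>t\<in>A. length (c1 t)) = (\<Sum>t\<in>A. length (c t))"
      unfolding c1_def by (rule len_swap[OF fin l(1) xA])
    moreover have "\<forall>t\<in>A. length (c1 t) \<le> length (c1 x)"
      using Dge l False xA unfolding c1_def by auto
    ultimately show ?thesis using key[of c1 x y] xy by (auto simp: G_def)
  qed
qed

lemma normalize:
  fixes A :: "nat set"
  assumes fin: "finite A"
  shows "pf A c \<Longrightarrow> \<exists>c'. pf A c' \<and> (\<forall>t\<in>A. length (c' t) \<le> length (c t)) \<and> (\<forall>t\<in>A. length (c' t) < card A)"
proof (induction "\<Sum>t\<in>A. length (c t)" arbitrary: c rule: less_induct)
  case less
  show ?case
  proof (cases "\<forall>t\<in>A. length (c t) < card A")
    case True then show ?thesis using less.prems by blast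
  next
    case False
    then obtain i where i: "i \<in> A" "card A \<le> length (c i)" by force
    define w where "w = c i"
    define \<sigma> where "\<sigma> = (\<lambda>k. take k w @ [\<not> w ! k])"
    have "\<exists>k<length w. \<forall>t\<in>A. \<not> prefix (\<sigma> k) (c t)"
    proof (rule ccontr)
      assume "\<not> ?thesis"
      then have "\<forall>k<length w. \<exists>t. t \<in> A \<and> prefix (\<sigma> k) (c t)" by blast
      then obtain f where f: "\<And>k. k < length w \<Longrightarrow> f k \<in> A \<and> prefix (\<sigma> k) (c (f k))"
        by metis
      have nth\<sigma>: "\<sigma> k ! k = (\<not> w ! k)" "length (\<sigma> k) = Suc k" if "k < length w" for k
        using that unfolding \<sigma>_def by (auto simp: nth_append min_def)
      have nth\<sigma>2: "\<sigma> k' ! k = w ! k" if "k < k'" "k' < length w" for k k'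
        using that unfolding \<sigma>_def by (auto simp: nth_append min_def)
      have fi: "f k \<noteq> i" if "k < length w" for k
      proof
        assume "f k = i"
        then have "prefix (\<sigma> k) w" using f[OF that] unfolding w_def by simp
        then have "\<sigma> k ! k = w ! k" using nth\<sigma>[OF that] unfolding prefix_nth_iff by auto
        then show False using nth\<sigma>[OF that] by simp
      qed
      have inj: "inj_on f {..<length w}"
      proof (rule inj_onI)
        fix k k' assume kk: "k \<in> {..<length w}" "k' \<in> {..<length w}" "f k = f k'"
        show "k = k'"
        proof (rule ccontr)
          assume "k \<noteq> k'"
          then consider "k < k'" | "k' < k" by linarith
          then show False
          proof cases
            case 1
            have "c (f k) ! k = \<sigma> k ! k" using f[of k] kk nth\<sigma>[of k] unfolding prefix_nth_iff by auto
            moreover have "c (f k') ! k = \<sigma> k' ! k" using f[of k'] kk nth\<sigma>[of k'] 1 unfolding prefix_nth_iff by auto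
            ultimately show False using kk nth\<sigma>[of k] nth\<sigma>2[of k k'] 1 by auto
          next
            case 2
            have "c (f k') ! k' = \<sigma> k' ! k'" using f[of k'] kk nth\<sigma>[of k'] unfolding prefix_nth_iff by auto
            moreover have "c (f k) ! k' = \<sigma> k ! k'" using f[of k] kk nth\<sigma>[of k] 2 unfolding prefix_nth_iff by auto
            ultimately show False using kk nth\<sigma>[of k'] nth\<sigma>2[of k' k] 2 by auto
          qed
        qed
      qed
      have "f ` {..<length w} \<subseteq> A - {i}" using f fi by auto
      then have "card (f ` {..<length w}) \<le> card (A - {i})" using fin by (intro card_mono) auto
      then have "length w \<le> card A - 1" using card_image[OF inj] i(1) fin by simp
      moreover have "card A \<ge> 1" using i(1) fin by (metis One_nat_def card_0_eq empty_iff less_one not_le)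
      ultimately show False using i(2) unfolding w_def by linarith
    qed
    then obtain k where k: "k < length w" "\<forall>t\<in>A. \<not> prefix (take k w @ [\<not> w ! k]) (c t)"
      unfolding \<sigma>_def by blast
    define c2 where "c2 = (\<lambda>t. delop (take k w) (w ! k) (c t))"
    have pf2: "pf A c2" unfolding c2_def using delop_pf[OF less.prems] k(2) by simp
    have len_le: "length (c2 t) \<le> length (c t)" for t unfolding c2_def by (rule delop_length)
    have "prefix (take k w @ [w ! k]) (c i)"
      using k(1) unfolding w_def by (metis take_Suc_conv_app_nth take_is_prefix)
    then have "length (c2 i) < length (c i)" unfolding c2_def by (rule delop_length_less)
    then have lt: "(\<Sum>t\<in>A. length (c2 t)) < (\<Sum>t\<in>A. length (c t))"
      using i(1) fin len_le by (intro sum_strict_mono_ex1) auto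
    obtain c' where "pf A c'" "\<forall>t\<in>A. length (c' t) \<le> length (c2 t)" "\<forall>t\<in>A. length (c' t) < card A"
      using less.hyps[OF lt pf2] by blast
    then show ?thesis using len_le by (meson order_trans)
  qed
qed

locale setting =
  fixes p :: "nat \<Rightarrow> real" and a :: real and r :: nat
  assumes ppos: "\<And>i. p i > 0" and psum: "p sums 1" and apos: "a > 0"
    and cond: "\<And>i j. r < j \<Longrightarrow> i < j \<Longrightarrow>
        p i \<ge> p j \<and> ennreal (p i) \<ge> (\<Sum>k. ennreal (p (j + 1 + k) * a ^ (k + 1)))"
begin

definition \<phi> :: "nat \<Rightarrow> real" where
  "\<phi> d = (if a = 1 then real d else if 1 < a then a ^ d else - (a ^ d))"
definition W :: "nat \<Rightarrow> real" where "W j = (\<Sum>k. p (j + 1 + k) * a ^ (k + 1))"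
definition K :: "nat \<Rightarrow> real" where
  "K j = (if a = 1 then (\<Sum>k. p (j + 1 + k) * real (k + 1)) else 0)"
definition Tc :: "nat \<Rightarrow> nat \<Rightarrow> real" where "Tc j d = W j * \<phi> d + K j"
definition wt :: "nat \<Rightarrow> nat \<Rightarrow> real" where "wt j i = (if i \<le> j then p i else W j)"
definition kk :: "nat \<Rightarrow> nat \<Rightarrow> real" where "kk j i = (if i \<le> j then 0 else K j)"
definition fcost :: "nat \<Rightarrow> (nat \<Rightarrow> bool list) \<Rightarrow> real" where
  "fcost j c = gcost (wt j) (kk j) \<phi> {..Suc j} c"

lemma pnn: "0 \<le> p i" using ppos[of i] by simp

lemma psummable: "summable p" using psum by (simp add: sums_iff)

lemma p_tendsto: "p \<longlonglongrightarrow> 0" using summable_LIMSEQ_zero[OF psummable] .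

lemma pmono: "r < j \<Longrightarrow> i < j \<Longrightarrow> p j \<le> p i" using cond by blast

lemma Wser_summable_big:
  assumes "r < j" shows "summable (\<lambda>k. p (j + 1 + k) * a ^ (k + 1))"
proof -
  have j0: "0 < j" using assms by simp
  have "(\<Sum>k. ennreal (p (j + 1 + k) * a ^ (k + 1))) \<le> ennreal (p 0)"
    using cond[OF assms j0] by (rule conjunct2)
  then have "(\<Sum>k. ennreal (p (j + 1 + k) * a ^ (k + 1))) \<noteq> top"
    by (rule neq_top_trans[rotated]) simp
  moreover have "\<And>k. 0 \<le> p (j + 1 + k) * a ^ (k + 1)"
    using pnn apos by (intro mult_nonneg_nonneg zero_le_power) (auto intro: less_imp_le)
  ultimately show ?thesis by (intro summable_suminf_not_top)
qed

lemma term_nn: "0 \<le> p i * a ^ n"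
  using pnn apos by (intro mult_nonneg_nonneg zero_le_power) (auto intro: less_imp_le)

lemma Wser_summable: "summable (\<lambda>k. p (j + 1 + k) * a ^ (k + 1))"
proof (cases "r < j")
  case True then show ?thesis by (rule Wser_summable_big)
next
  case False
  define m where "m = Suc r - j"
  have jm: "j + m = Suc r" using False unfolding m_def by simp
  have eq: "p (j + 1 + (k + m)) * a ^ (k + m + 1) = a ^ m * (p (Suc r + 1 + k) * a ^ (k + 1))" for k
  proof -
    have e1: "j + 1 + (k + m) = Suc r + 1 + k" using jm by simp
    have e2: "a ^ (k + m + 1) = a ^ m * a ^ (k + 1)" by (simp add: power_add[symmetric] add.commute)
    show ?thesis unfolding e1 e2 by (simp only: mult.assoc mult.left_commute)
  qed
  have "summable (\<lambda>k. a ^ m * (p (Suc r + 1 + k) * a ^ (k + 1)))"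
    using Wser_summable_big[of "Suc r"] by (intro summable_mult) auto
  then have "summable (\<lambda>k. p (j + 1 + (k + m)) * a ^ (k + m + 1))" by (simp only: eq)
  then show ?thesis using summable_iff_shift[of "\<lambda>k. p (j + 1 + k) * a ^ (k + 1)" m] by simp
qed

lemma W_nonneg: "0 \<le> W j"
  unfolding W_def by (rule suminf_nonneg[OF Wser_summable]) (rule term_nn)

lemma W_le: assumes "r < j" "i < j" shows "W j \<le> p i"
proof -
  have "ennreal (W j) = (\<Sum>k. ennreal (p (j + 1 + k) * a ^ (k + 1)))"
    unfolding W_def by (rule suminf_ennreal2[symmetric, OF _ Wser_summable]) (rule term_nn)
  also have "\<dots> \<le> ennreal (p i)" using cond assms by blast
  finally show ?thesis using pnn by simp
qed

lemma W_rec: "W j = a * (p (Suc j) + W (Suc j))"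
proof -
  let ?f = "\<lambda>k. p (j + 1 + k) * a ^ (k + 1)"
  have "(\<Sum>k. ?f (Suc k)) = W j - ?f 0" unfolding W_def by (rule suminf_split_head[OF Wser_summable])
  moreover have "?f (Suc k) = a * (p (Suc j + 1 + k) * a ^ (k + 1))" for k
    by (simp add: algebra_simps)
  then have "(\<Sum>k. ?f (Suc k)) = (\<Sum>k. a * (p (Suc j + 1 + k) * a ^ (k + 1)))"
    by presburger
  moreover have "(\<Sum>k. a * (p (Suc j + 1 + k) * a ^ (k + 1))) = a * W (Suc j)"
    unfolding W_def by (rule suminf_mult[OF Wser_summable])
  ultimately show ?thesis by (simp add: algebra_simps)
qed

lemma W_le2: assumes "r < j" "i \<le> j" shows "W j \<le> (1 + 2 * a) * p i"
proof -
  have e: "(1 + 2 * a) * p i = p i + 2 * a * p i" by (simp add: distrib_right)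
  have nn: "0 \<le> 2 * a * p i" using apos pnn[of i] by simp
  show ?thesis
  proof (cases "i < j")
    case True
    then have "W j \<le> p i" using W_le assms by blast
    then show ?thesis using e nn by linarith
  next
    case False
    then have ij: "i = j" using assms by simp
    have "p (Suc j) \<le> p j" using pmono[of "Suc j" j] assms by simp
    moreover have "W (Suc j) \<le> p j" using W_le[of "Suc j" j] assms by simp
    ultimately have "p (Suc j) + W (Suc j) \<le> 2 * p j" by simp
    then have "a * (p (Suc j) + W (Suc j)) \<le> a * (2 * p j)" using apos by (intro mult_left_mono) auto
    then have "W j \<le> 2 * a * p j" using W_rec[of j] by simp
    then show ?thesis using e nn pnn[of j] unfolding ij by linarith
  qed
qed

lemma W_tendsto: "W \<longlonglongrightarrow> 0"
proof -
  have h: "(\<lambda>n. p (n + r)) \<longlonglongrightarrow> 0" using p_tendsto by (rule LIMSEQ_ignore_initial_segment)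
  have ev1: "eventually (\<lambda>n. (\<lambda>_. 0::real) n \<le> W (n + Suc r)) sequentially"
    by (intro always_eventually allI) (simp only: W_nonneg)
  have ev2: "eventually (\<lambda>n. W (n + Suc r) \<le> p (n + r)) sequentially"
  proof (intro always_eventually allI)
    fix n show "W (n + Suc r) \<le> p (n + r)" by (rule W_le) auto
  qed
  have "(\<lambda>n. W (n + Suc r)) \<longlonglongrightarrow> 0"
    by (rule real_tendsto_sandwich[OF ev1 ev2 tendsto_const h])
  then show ?thesis by (rule LIMSEQ_offset)
qed

lemma phi_mono: "mono \<phi>"
proof (rule monoI)
  fix x y :: nat assume "x \<le> y"
  show "\<phi> x \<le> \<phi> y"
  proof (cases "a = 1")
    case True then show ?thesis unfolding \<phi>_def using \<open>x \<le> y\<close> by simp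
  next
    case False
    show ?thesis
    proof (cases "1 < a")
      case True then show ?thesis unfolding \<phi>_def using \<open>x \<le> y\<close> False by (simp add: power_increasing)
    next
      case False2: False
      then have "a < 1" using False by simp
      then have "a ^ y \<le> a ^ x" using apos \<open>x \<le> y\<close> by (simp add: power_decreasing)
      then show ?thesis unfolding \<phi>_def using False False2 by simp
    qed
  qed
qed

lemma phi_Suc: "a \<noteq> 1 \<Longrightarrow> \<phi> (Suc d) = a * \<phi> d"
  by (simp add: \<phi>_def)

lemma phi_nonneg: "1 \<le> a \<Longrightarrow> 0 \<le> \<phi> d"
  by (auto simp: \<phi>_def)

lemma phi_ge: "a < 1 \<Longrightarrow> - 1 \<le> \<phi> d \<and> \<phi> d \<le> 0"
proof -
  assume a1: "a < 1"
  have "a ^ d \<le> 1" using apos a1 by (intro power_le_one) auto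
  moreover have "0 \<le> a ^ d" using apos by simp
  ultimately show ?thesis using a1 by (simp add: \<phi>_def)
qed

end

lemma tail_tendsto:
  fixes f :: "nat \<Rightarrow> real"
  assumes "summable f" shows "(\<lambda>n. \<Sum>i. f (i + n)) \<longlonglongrightarrow> 0"
proof -
  have "(\<lambda>n. suminf f - (\<Sum>i<n. f i)) \<longlonglongrightarrow> suminf f - suminf f"
    by (intro tendsto_diff tendsto_const summable_LIMSEQ[OF assms])
  moreover have "(\<Sum>i. f (i + n)) = suminf f - (\<Sum>i<n. f i)" for n
    by (rule suminf_minus_initial_segment[OF assms])
  ultimately show ?thesis by simp
qed


context setting
begin

lemma W1: "a = 1 \<Longrightarrow> W j = (\<Sum>k. p (j + 1 + k))"
  unfolding W_def by simp

lemma W_summable1: assumes "a = 1" shows "summable W"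
proof -
  have "summable (\<lambda>n. p (n + r))" using psummable by simp
  moreover have "norm (W (n + Suc r)) \<le> p (n + r)" for n
    using W_nonneg[of "n + Suc r"] W_le[of "n + Suc r" "n + r"] by simp
  ultimately have "summable (\<lambda>n. W (n + Suc r))" by (rule summable_comparison_test'[where N=0])
  then show ?thesis by (rule summable_iff_shift[THEN iffD1])
qed

lemma psum_seg_le: assumes "a = 1" shows "(\<Sum>i\<in>{Suc j..N}. p i) \<le> W j"
proof (cases "j < N")
  case False
  then have "{Suc j..N} = {}" by auto
  then show ?thesis using W_nonneg by simp
next
  case True
  have dis: "{..<Suc j} \<inter> {Suc j..N} = {}" by auto
  have un: "{..N} = {..<Suc j} \<union> {Suc j..N}" using True by auto
  have "(\<Sum>i\<le>N. p i) = (\<Sum>i<Suc j. p i) + (\<Sum>i\<in>{Suc j..N}. p i)"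
    unfolding un by (rule sum.union_disjoint) (use dis in auto)
  moreover have "(\<Sum>i\<le>N. p i) \<le> suminf p"
    by (rule sum_le_suminf[OF psummable]) (auto simp: pnn)
  moreover have "W j = suminf p - (\<Sum>i<Suc j. p i)"
  proof -
    have "W j = (\<Sum>k. p (k + Suc j))" using W1[OF assms] by (simp add: add.commute)
    also have "\<dots> = suminf p - (\<Sum>i<Suc j. p i)" by (rule suminf_minus_initial_segment[OF psummable])
    finally show ?thesis .
  qed
  ultimately show ?thesis by linarith
qed


end

context setting
begin

lemma np_summable: assumes "a = 1" shows "summable (\<lambda>n. real n * p n)"
proof (rule bounded_imp_summable)
  show "0 \<le> real n * p n" for n using pnn by simp
  fix N
  have "(\<Sum>i\<le>N. real i * p i) = (\<Sum>i\<le>N. \<Sum>j<i. p i)" by simp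
  also have "\<dots> = (\<Sum>j<N. \<Sum>i\<in>{Suc j..N}. p i)" by (rule sum.nested_swap')
  also have "\<dots> \<le> (\<Sum>j<N. W j)" by (intro sum_mono psum_seg_le[OF assms])
  also have "\<dots> \<le> suminf W" by (rule sum_le_suminf[OF W_summable1[OF assms]]) (auto simp: W_nonneg)
  finally show "(\<Sum>i\<le>N. real i * p i) \<le> suminf W" .
qed

lemma Kser_summable: assumes "a = 1" shows "summable (\<lambda>k. p (j + 1 + k) * real (k + 1))"
proof -
  have "summable (\<lambda>k. real (k + (j + 1)) * p (k + (j + 1)))"
    by (rule summable_iff_shift[where f="\<lambda>n. real n * p n" and k="j+1", THEN iffD2, OF np_summable[OF assms]])
  moreover have "norm (p (j + 1 + k) * real (k + 1)) \<le> real (k + (j + 1)) * p (k + (j + 1))" for k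
  proof -
    have "norm (p (j + 1 + k) * real (k + 1)) = p (j + 1 + k) * real (k + 1)" using pnn by simp
    also have "\<dots> \<le> p (j + 1 + k) * real (k + (j + 1))" using pnn by (intro mult_left_mono) auto
    finally show ?thesis by (simp add: add.commute mult.commute)
  qed
  ultimately show ?thesis by (rule summable_comparison_test'[where N=0])
qed

lemma K_nonneg: "0 \<le> K j"
proof (cases "a = 1")
  case True
  then show ?thesis unfolding K_def using Kser_summable[OF True] pnn
    by (simp add: suminf_nonneg)
qed (simp add: K_def)


end

context setting
begin

lemma K_tendsto: "K \<longlonglongrightarrow> 0"
proof (cases "a = 1")
  case False
  then have "K = (\<lambda>_. 0)" unfolding K_def by (simp add: fun_eq_iff)
  then show ?thesis by simp
next
  case True
  let ?T = "\<lambda>n. \<Sum>i. real (i + n) * p (i + n)"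
  have h: "(\<lambda>n. ?T (Suc n)) \<longlonglongrightarrow> 0"
    using LIMSEQ_Suc[OF tail_tendsto[OF np_summable[OF True]]] .
  have ev1: "eventually (\<lambda>n. (\<lambda>_. 0::real) n \<le> K n) sequentially"
    by (intro always_eventually allI) (simp only: K_nonneg)
  have ev2: "eventually (\<lambda>n. K n \<le> ?T (Suc n)) sequentially"
  proof (intro always_eventually allI)
    fix n
    have "K n = (\<Sum>k. p (n + 1 + k) * real (k + 1))" unfolding K_def using True by simp
    also have "\<dots> \<le> ?T (Suc n)"
    proof (rule suminf_le)
      show "summable (\<lambda>k. p (n + 1 + k) * real (k + 1))" by (rule Kser_summable[OF True])
      show "summable (\<lambda>i. real (i + Suc n) * p (i + Suc n))"
        by (rule summable_iff_shift[where f="\<lambda>n. real n * p n" and k="Suc n", THEN iffD2, OF np_summable[OF True]])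
      fix k show "p (n + 1 + k) * real (k + 1) \<le> real (k + Suc n) * p (k + Suc n)"
      proof -
        have "p (n + 1 + k) * real (k + 1) \<le> p (n + 1 + k) * real (k + Suc n)"
          using pnn by (intro mult_left_mono) auto
        then show ?thesis by (simp add: add.commute mult.commute add.left_commute)
      qed
    qed
    finally show "K n \<le> ?T (Suc n)" .
  qed
  show ?thesis by (rule real_tendsto_sandwich[OF ev1 ev2 tendsto_const h])
qed


end

context setting
begin

lemma K_rec: assumes "a = 1" shows "K j = W j + K (Suc j)"
proof -
  let ?g = "\<lambda>k. p (j + 1 + k) * real (k + 1)"
  have Kj: "K j = (\<Sum>k. ?g k)" "K (Suc j) = (\<Sum>k. p (Suc j + 1 + k) * real (k + 1))"
    unfolding K_def using assms by simp_all
  have "(\<Sum>k. ?g (Suc k)) = K j - ?g 0"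
    unfolding Kj by (rule suminf_split_head[OF Kser_summable[OF assms, of j]])
  moreover have "?g (Suc k) = p (Suc j + 1 + k) + p (Suc j + 1 + k) * real (k + 1)" for k
    by (simp add: algebra_simps)
  then have "(\<Sum>k. ?g (Suc k)) = (\<Sum>k. p (Suc j + 1 + k) + p (Suc j + 1 + k) * real (k + 1))"
    by presburger
  moreover have "\<dots> = (\<Sum>k. p (Suc j + 1 + k)) + (\<Sum>k. p (Suc j + 1 + k) * real (k + 1))"
  proof (rule suminf_add[symmetric])
    show "summable (\<lambda>k. p (Suc j + 1 + k))" using Wser_summable[of "Suc j"] assms by simp
    show "summable (\<lambda>k. p (Suc j + 1 + k) * real (k + 1))" by (rule Kser_summable[OF assms])
  qed
  moreover have "W j = p (Suc j) + W (Suc j)" using W_rec[of j] assms by simp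
  ultimately show ?thesis using W1[OF assms, of "Suc j"] Kj(2) by simp
qed

lemma Tc_rec: "Tc j d = p (Suc j) * \<phi> (Suc d) + Tc (Suc j) (Suc d)"
proof (cases "a = 1")
  case True
  have "\<phi> (Suc d) = \<phi> d + 1" "\<phi> d = real d" unfolding \<phi>_def using True by simp_all
  moreover have "W j = p (Suc j) + W (Suc j)" using W_rec[of j] True by simp
  moreover have "K j = W j + K (Suc j)" by (rule K_rec[OF True])
  ultimately show ?thesis unfolding Tc_def by (simp add: algebra_simps)
next
  case False
  then have "K j = 0" "K (Suc j) = 0" by (simp_all add: K_def)
  then show ?thesis unfolding Tc_def using W_rec[of j] phi_Suc[OF False, of d]
    by (simp add: algebra_simps)
qed

lemma Tc_mono: "d \<le> d' \<Longrightarrow> Tc j d \<le> Tc j d'"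
  unfolding Tc_def using W_nonneg monoD[OF phi_mono] by (simp add: mult_left_mono)


end

lemma unary_prefix:
  assumes "prefix (replicate i True @ [False]) (replicate k True @ [False])"
  shows "i = k"
proof (rule ccontr)
  assume ik: "i \<noteq> k"
  have len: "i \<le> k" using prefix_length_le[OF assms] by simp
  then have "i < k" using ik by simp
  then have "(replicate i True @ [False]) ! i = (replicate k True @ [False]) ! i"
    using assms unfolding prefix_nth_iff by auto
  then show False using \<open>i < k\<close> by (simp add: nth_append)
qed

lemma unary_prefix2:
  assumes "i < m"
  shows "\<not> prefix (replicate m True) (replicate i True @ [False])"
    and "\<not> prefix (replicate i True @ [False]) (replicate m True)"
proof -
  show "\<not> prefix (replicate m True) (replicate i True @ [False])"
  proof
    assume P: "prefix (replicate m True) (replicate i True @ [False])"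
    have "m \<le> Suc i" using prefix_length_le[OF P] by simp
    then have "m = Suc i" using assms by simp
    then have "(replicate m True) ! i = (replicate i True @ [False]) ! i"
      using P unfolding prefix_nth_iff by auto
    then show False using assms by (simp add: nth_append)
  qed
  show "\<not> prefix (replicate i True @ [False]) (replicate m True)"
  proof
    assume P: "prefix (replicate i True @ [False]) (replicate m True)"
    then have "(replicate i True @ [False]) ! i = (replicate m True) ! i"
      unfolding prefix_nth_iff by auto
    then show False using assms by (simp add: nth_append)
  qed
qed

lemma gcost_len_cong:
  assumes "\<And>t. t \<in> A \<Longrightarrow> length (c' t) = length (c t)"
  shows "gcost w kk \<phi> A c' = gcost w kk \<phi> A c"
  unfolding gcost_def using assms by (intro sum.cong) auto

context setting
begin

lemma fcost_alt: "fcost j c = (\<Sum>i\<le>j. p i * \<phi> (length (c i))) + Tc j (length (c (Suc j)))"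
proof -
  have "fcost j c = (\<Sum>i\<le>j. wt j i * \<phi> (length (c i)) + kk j i) + (wt j (Suc j) * \<phi> (length (c (Suc j))) + kk j (Suc j))"
    unfolding fcost_def gcost_def by (simp add: sum.atMost_Suc)
  moreover have "(\<Sum>i\<le>j. wt j i * \<phi> (length (c i)) + kk j i) = (\<Sum>i\<le>j. p i * \<phi> (length (c i)))"
    by (intro sum.cong) (auto simp: wt_def kk_def)
  ultimately show ?thesis by (simp add: wt_def kk_def Tc_def)
qed

lemma wt_nonneg: "0 \<le> wt j i"
  unfolding wt_def using pnn W_nonneg by simp

lemma reduce:
  assumes rj: "r \<le> j" and pfc: "pf {..Suc (Suc j)} c"
  shows "\<exists>c'. pf {..Suc j} c' \<and> fcost j c' \<le> fcost (Suc j) c"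
proof -
  let ?A = "{..Suc (Suc j)}"
  have "\<exists>c' s b. pf ?A c' \<and> gcost (wt (Suc j)) (kk (Suc j)) \<phi> ?A c' \<le> gcost (wt (Suc j)) (kk (Suc j)) \<phi> ?A c \<and>
            c' (Suc j) = s @ [b] \<and> c' (Suc (Suc j)) = s @ [\<not> b]"
  proof (rule sibling[OF _ _ _ _ phi_mono _ _ _ pfc])
    show "finite ?A" by simp
    show "Suc j \<in> ?A" "Suc (Suc j) \<in> ?A" "Suc j \<noteq> Suc (Suc j)" by auto
    show "0 \<le> wt (Suc j) t" for t by (rule wt_nonneg)
    fix t assume t: "t \<in> ?A" "t \<noteq> Suc j" "t \<noteq> Suc (Suc j)"
    then have tj: "t < Suc j" by auto
    show "wt (Suc j) (Suc j) \<le> wt (Suc j) t" using pmono[of "Suc j" t] tj rj by (simp add: wt_def)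
    show "wt (Suc j) (Suc (Suc j)) \<le> wt (Suc j) t" using W_le[of "Suc j" t] tj rj by (simp add: wt_def)
  qed
  then obtain c1 s b where c1: "pf ?A c1" "fcost (Suc j) c1 \<le> fcost (Suc j) c"
      "c1 (Suc j) = s @ [b]" "c1 (Suc (Suc j)) = s @ [\<not> b]"
    unfolding fcost_def by auto
  define c' where "c' = c1(Suc j := s)"
  have pf': "pf {..Suc j} c'"
    unfolding pf_def
  proof (intro ballI impI)
    fix i k assume ik: "i \<in> {..Suc j}" "k \<in> {..Suc j}" "i \<noteq> k"
    have np: "\<not> prefix (c1 i') (c1 k')" if "i' \<in> ?A" "k' \<in> ?A" "i' \<noteq> k'" for i' k'
      using c1(1) that unfolding pf_def by blast
    have key1: "\<not> prefix (c1 t) s" if "t \<le> j" for t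
    proof
      assume "prefix (c1 t) s"
      then have "prefix (c1 t) (c1 (Suc j))" using c1(3) by simp
      then show False using np[of t "Suc j"] that by simp
    qed
    have key2: "\<not> prefix s (c1 t)" if "t \<le> j" for t
    proof
      assume P: "prefix s (c1 t)"
      show False
      proof (cases "c1 t = s")
        case True then show False using key1[OF that] by simp
      next
        case False
        then have "prefix (s @ [True]) (c1 t) \<or> prefix (s @ [False]) (c1 t)"
          using prefix_snoc_cases[OF P] by simp
        then have "prefix (c1 (Suc j)) (c1 t) \<or> prefix (c1 (Suc (Suc j))) (c1 t)"
          using c1(3,4) by (cases b) auto
        then show False using np[of "Suc j" t] np[of "Suc (Suc j)" t] that by auto
      qed
    qed
    show "\<not> prefix (c' i) (c' k)"
    proof (cases "i = Suc j")
      case True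
      then have "k \<le> j" using ik by auto
      then show ?thesis using key2 True ik(3) unfolding c'_def by simp
    next
      case False
      then have i: "i \<le> j" using ik by auto
      show ?thesis
      proof (cases "k = Suc j")
        case True then show ?thesis using key1[OF i] False unfolding c'_def by simp
      next
        case False2: False
        then show ?thesis using np[of i k] ik False unfolding c'_def by auto
      qed
    qed
  qed
  have "fcost j c' = (\<Sum>i\<le>j. p i * \<phi> (length (c1 i))) + Tc j (length s)"
    unfolding fcost_alt c'_def by simp
  also have "\<dots> = (\<Sum>i\<le>j. p i * \<phi> (length (c1 i))) + p (Suc j) * \<phi> (Suc (length s)) + Tc (Suc j) (Suc (length s))"
    using Tc_rec[of j "length s"] by simp
  also have "\<dots> = fcost (Suc j) c1"
    unfolding fcost_alt[of "Suc j"] using c1(3,4) by (simp add: sum.atMost_Suc)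
  finally show ?thesis using pf' c1(2) by auto
qed

lemma chain:
  assumes "r \<le> j"
  shows "\<forall>c. pf {..Suc j} c \<longrightarrow> (\<exists>c'. pf {..Suc r} c' \<and> fcost r c' \<le> fcost j c)"
  using assms
proof (induction j rule: dec_induct)
  case base then show ?case by blast
next
  case (step n)
  show ?case
  proof (intro allI impI)
    fix c assume "pf {..Suc (Suc n)} c"
    then obtain c2 where "pf {..Suc n} c2" "fcost n c2 \<le> fcost (Suc n) c"
      using reduce[OF step(1)] by blast
    then show "\<exists>c'. pf {..Suc r} c' \<and> fcost r c' \<le> fcost (Suc n) c"
      using step(3) by (meson order_trans)
  qed
qed

definition Bnd :: "(nat \<Rightarrow> bool list) set" where
  "Bnd = {c. \<forall>i. (i \<in> {..Suc r} \<longrightarrow> c i \<in> {xs. set xs \<subseteq> UNIV \<and> length xs \<le> Suc r}) \<and> (i \<notin> {..Suc r} \<longrightarrow> c i = [])}"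

definition SS :: "(nat \<Rightarrow> bool list) set" where
  "SS = Bnd \<inter> {c. pf {..Suc r} c}"

lemma finite_SS: "finite SS"
proof -
  have "finite Bnd" unfolding Bnd_def
    by (rule finite_set_of_finite_funs) (use finite_lists_length_le[of "UNIV::bool set" "Suc r"] in auto)
  then show ?thesis unfolding SS_def by simp
qed

definition u0 :: "nat \<Rightarrow> bool list" where
  "u0 i = (if i \<le> r then replicate i True @ [False] else if i = Suc r then replicate (Suc r) True else [])"

lemma u0_SS: "u0 \<in> SS"
proof -
  have "u0 \<in> Bnd" unfolding Bnd_def u0_def by auto
  moreover have "pf {..Suc r} u0"
    unfolding pf_def
  proof (intro ballI impI)
    fix i k assume ik: "i \<in> {..Suc r}" "k \<in> {..Suc r}" "i \<noteq> k"
    show "\<not> prefix (u0 i) (u0 k)"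
    proof (cases "i \<le> r")
      case True
      show ?thesis
      proof (cases "k \<le> r")
        case True2: True
        then have eqs: "u0 i = replicate i True @ [False]" "u0 k = replicate k True @ [False]"
          using True unfolding u0_def by auto
        show ?thesis unfolding eqs using ik(3) unary_prefix[of i k] by blast
      next
        case False
        then have "k = Suc r" using ik by auto
        moreover have "u0 i = replicate i True @ [False]" using True unfolding u0_def by auto
        ultimately show ?thesis using unary_prefix2(2)[of i "Suc r"] True unfolding u0_def by simp
      qed
    next
      case False
      then have "i = Suc r" using ik by auto
      then have "k \<le> r" using ik by auto
      moreover have "u0 k = replicate k True @ [False]" using \<open>k \<le> r\<close> unfolding u0_def by auto
      ultimately show ?thesis using \<open>i = Suc r\<close> unary_prefix2(1)[of k "Suc r"] unfolding u0_def by simp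
    qed
  qed
  ultimately show ?thesis unfolding SS_def by simp
qed

definition M :: real where "M = Min (fcost r ` SS)"

lemma M_attained: "\<exists>c0\<in>SS. fcost r c0 = M"
proof -
  have "M \<in> fcost r ` SS" unfolding M_def using finite_SS u0_SS by (intro Min_in) auto
  then show ?thesis by auto
qed

lemma M_le:
  assumes "pf {..Suc r} c3" shows "M \<le> fcost r c3"
proof -
  obtain c4 where c4: "pf {..Suc r} c4" "\<forall>t\<in>{..Suc r}. length (c4 t) \<le> length (c3 t)"
      "\<forall>t\<in>{..Suc r}. length (c4 t) < card {..Suc r}"
    using normalize[of "{..Suc r}" c3] assms by auto
  define c5 where "c5 = (\<lambda>i. if i \<le> Suc r then c4 i else [])"
  have "c5 \<in> Bnd" unfolding Bnd_def c5_def using c4(3) by (auto simp: less_Suc_eq_le)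
  moreover have "pf {..Suc r} c5" using c4(1) by (rule pf_cong) (simp add: c5_def)
  ultimately have "c5 \<in> SS" unfolding SS_def by simp
  then have "M \<le> fcost r c5" unfolding M_def using finite_SS by simp
  also have "fcost r c5 = fcost r c4" unfolding fcost_def by (rule gcost_cong) (simp add: c5_def)
  also have "\<dots> \<le> fcost r c3" unfolding fcost_def
    using c4(2) by (intro gcost_mono[OF phi_mono wt_nonneg]) auto
  finally show ?thesis .
qed

end

context setting
begin

definition cost :: "(nat \<Rightarrow> bool list) \<Rightarrow> real" where
  "cost c = (\<Sum>i. p i * \<phi> (length (c i)))"

definition tail :: "(nat \<Rightarrow> bool list) \<Rightarrow> nat \<Rightarrow> real" where
  "tail c j = (\<Sum>n. p (n + Suc j) * \<phi> (length (c (n + Suc j))))"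

lemma approx_j:
  assumes pc: "prefix_code c" and sm: "summable (\<lambda>i. p i * \<phi> (length (c i)))"
  shows "\<exists>c'' d i0. pf {..Suc j} c'' \<and> i0 \<le> j \<and> d \<le> length (c i0) \<and>
           fcost j c'' = cost c - tail c j + Tc j d"
proof -
  define L where "L = Max ((\<lambda>i. length (c i)) ` {..j})"
  have "L \<in> (\<lambda>i. length (c i)) ` {..j}" unfolding L_def by (intro Max_in) auto
  then obtain i0 where i0: "i0 \<le> j" "length (c i0) = L" by auto
  have Lge: "length (c i) \<le> L" if "i \<le> j" for i unfolding L_def using that by auto
  define v where "v = take L (c (Suc j))"
  define c'' where "c'' = c(Suc j := v)"
  have np: "\<not> prefix (c i) (c k)" if "i \<noteq> k" for i k using pc that unfolding prefix_code_def by blast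
  have pf'': "pf {..Suc j} c''"
    unfolding pf_def
  proof (intro ballI impI)
    fix i k assume ik: "i \<in> {..Suc j}" "k \<in> {..Suc j}" "i \<noteq> k"
    have k1: "\<not> prefix (c t) v" if "t \<le> j" for t
    proof
      assume "prefix (c t) v"
      then have "prefix (c t) (c (Suc j))" unfolding v_def using take_is_prefix prefix_order.trans by blast
      then show False using np[of t "Suc j"] that by simp
    qed
    have k2: "\<not> prefix v (c t)" if "t \<le> j" for t
    proof
      assume P: "prefix v (c t)"
      show False
      proof (cases "length (c (Suc j)) \<le> L")
        case True
        then have "v = c (Suc j)" unfolding v_def by simp
        then show False using P np[of "Suc j" t] that by simp
      next
        case False
        then have "length v = L" unfolding v_def by simp
        then have "length (c t) \<le> length v" using Lge[OF that] by simp
        then have "v = c t" using prefix_eq_len[OF P] by simp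
        then have "prefix (c t) (c (Suc j))" unfolding v_def using take_is_prefix by metis
        then show False using np[of t "Suc j"] that by simp
      qed
    qed
    show "\<not> prefix (c'' i) (c'' k)"
    proof (cases "i = Suc j")
      case True
      then have "k \<le> j" using ik by auto
      then show ?thesis using k2 True ik(3) unfolding c''_def by simp
    next
      case False
      then have i: "i \<le> j" using ik by auto
      show ?thesis
      proof (cases "k = Suc j")
        case True then show ?thesis using k1[OF i] False unfolding c''_def by simp
      next
        case False2: False
        then show ?thesis using np[of i k] ik False unfolding c''_def by auto
      qed
    qed
  qed
  have dle: "length v \<le> length (c i0)" unfolding v_def using i0 by simp
  have "cost c = tail c j + (\<Sum>i<Suc j. p i * \<phi> (length (c i)))"
    unfolding cost_def tail_def by (rule suminf_split_initial_segment[OF sm])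
  then have "cost c - tail c j = (\<Sum>i\<le>j. p i * \<phi> (length (c i)))"
    by (simp add: lessThan_Suc_atMost)
  moreover have "fcost j c'' = (\<Sum>i\<le>j. p i * \<phi> (length (c i))) + Tc j (length v)"
    unfolding fcost_alt c''_def by simp
  ultimately show ?thesis using pf'' i0(1) dle by auto
qed

lemma approx:
  assumes pc: "prefix_code c" and sm: "summable (\<lambda>i. p i * \<phi> (length (c i)))" and e: "0 < e"
  shows "\<exists>j c''. r \<le> j \<and> pf {..Suc j} c'' \<and> fcost j c'' \<le> cost c + e"
proof (cases "a < 1")
  case True
  then have a1: "a \<noteq> 1" by simp
  obtain N where N: "\<forall>n\<ge>N. norm (\<Sum>i. p (i + n)) < e" using suminf_exist_split[OF e psummable] by blast
  define j where "j = N + r"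
  obtain c'' d i0 where c'': "pf {..Suc j} c''" "fcost j c'' = cost c - tail c j + Tc j d"
    using approx_j[OF pc sm, of j] by blast
  have "Tc j d \<le> 0"
  proof -
    have "K j = 0" using a1 by (simp add: K_def)
    moreover have "W j * \<phi> d \<le> 0" using W_nonneg[of j] phi_ge[OF True, of d] by (simp add: mult_nonneg_nonpos)
    ultimately show ?thesis unfolding Tc_def by simp
  qed
  moreover have "- (\<Sum>n. p (n + Suc j)) \<le> tail c j"
  proof -
    have "(\<Sum>n. - p (n + Suc j)) \<le> tail c j" unfolding tail_def
    proof (rule suminf_le)
      show "summable (\<lambda>n. - p (n + Suc j))"
        by (rule summable_minus, rule summable_iff_shift[where f=p and k="Suc j", THEN iffD2, OF psummable])
      show "summable (\<lambda>n. p (n + Suc j) * \<phi> (length (c (n + Suc j))))"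
        by (rule summable_iff_shift[where f="\<lambda>i. p i * \<phi> (length (c i))", THEN iffD2, OF sm])
      fix n
      have "- 1 \<le> \<phi> (length (c (n + Suc j)))" using phi_ge[OF True] by blast
      then have "p (n + Suc j) * (- 1) \<le> p (n + Suc j) * \<phi> (length (c (n + Suc j)))"
        using pnn by (intro mult_left_mono) auto
      then show "- p (n + Suc j) \<le> p (n + Suc j) * \<phi> (length (c (n + Suc j)))" by simp
    qed
    moreover have "(\<Sum>n. - p (n + Suc j)) = - (\<Sum>n. p (n + Suc j))"
      by (rule suminf_minus, rule summable_iff_shift[where f=p and k="Suc j", THEN iffD2, OF psummable])
    ultimately show ?thesis by simp
  qed
  moreover have "(\<Sum>n. p (n + Suc j)) < e"
    using N[rule_format, of "Suc j"] unfolding j_def by simp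
  ultimately have "fcost j c'' \<le> cost c + e" using c''(2) by linarith
  moreover have "r \<le> j" unfolding j_def by simp
  ultimately show ?thesis using c''(1) by blast
next
  case False
  then have a1: "1 \<le> a" by simp
  define C where "C = 1 + 2 * a"
  have Cpos: "0 < C" unfolding C_def using apos by simp
  let ?f = "\<lambda>i. p i * \<phi> (length (c i))"
  have "?f \<longlonglongrightarrow> 0" by (rule summable_LIMSEQ_zero[OF sm])
  then obtain N1 where N1: "\<forall>n\<ge>N1. norm (?f n - 0) < e / (3 * C)"
    using LIMSEQ_D[of ?f 0 "e / (3 * C)"] e Cpos by auto
  define B where "B = Max ((\<lambda>i. \<phi> (length (c i))) ` {..N1})"
  have Bge: "\<phi> (length (c i)) \<le> B" if "i \<le> N1" for i unfolding B_def using that by auto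
  have B0: "0 \<le> B" using Bge[of 0] phi_nonneg[OF a1] by (meson order_trans zero_le)
  obtain N2 where N2: "\<forall>n\<ge>N2. norm (W n - 0) < e / (3 * (B + 1))"
    using LIMSEQ_D[OF W_tendsto, of "e / (3 * (B + 1))"] e B0 by auto
  obtain N3 where N3: "\<forall>n\<ge>N3. norm (K n - 0) < e / 3"
    using LIMSEQ_D[OF K_tendsto, of "e / 3"] e by auto
  define j where "j = N1 + N2 + N3 + Suc r"
  obtain c'' d i0 where c'': "pf {..Suc j} c''" "i0 \<le> j" "d \<le> length (c i0)"
      "fcost j c'' = cost c - tail c j + Tc j d"
    using approx_j[OF pc sm, of j] by blast
  have rj: "r < j" unfolding j_def by simp
  have Wj: "W j < e / (3 * (B + 1))" using N2[rule_format, of j] W_nonneg[of j] unfolding j_def by simp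
  have Kj: "K j < e / 3" using N3[rule_format, of j] K_nonneg[of j] unfolding j_def by simp
  have "0 \<le> tail c j" unfolding tail_def
  proof (rule suminf_nonneg)
    show "summable (\<lambda>n. p (n + Suc j) * \<phi> (length (c (n + Suc j))))"
      by (rule summable_iff_shift[where f="\<lambda>i. p i * \<phi> (length (c i))", THEN iffD2, OF sm])
    show "0 \<le> p (n + Suc j) * \<phi> (length (c (n + Suc j)))" for n
      using pnn phi_nonneg[OF a1] by simp
  qed
  have main: "W j * \<phi> (length (c i0)) \<le> e / 3"
  proof (cases "N1 \<le> i0")
    case True
    have "W j * \<phi> (length (c i0)) \<le> (C * p i0) * \<phi> (length (c i0))"
      using W_le2[OF rj c''(2)] phi_nonneg[OF a1] unfolding C_def by (intro mult_right_mono) auto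
    also have "\<dots> = C * ?f i0" by simp
    also have "\<dots> \<le> C * (e / (3 * C))"
      using N1[rule_format, OF True] Cpos by (intro mult_left_mono) auto
    also have "\<dots> = e / 3" using Cpos by simp
    finally show ?thesis .
  next
    case False
    have "W j * \<phi> (length (c i0)) \<le> W j * (B + 1)"
      using Bge[of i0] False W_nonneg[of j] by (intro mult_left_mono) auto
    also have "\<dots> \<le> e / (3 * (B + 1)) * (B + 1)" using Wj B0 by (intro mult_right_mono) auto
    also have "\<dots> = e / 3" using B0 by (simp add: field_simps)
    finally show ?thesis .
  qed
  have "Tc j d \<le> Tc j (length (c i0))" by (rule Tc_mono[OF c''(3)])
  also have "\<dots> = W j * \<phi> (length (c i0)) + K j" unfolding Tc_def by simp
  finally have "Tc j d \<le> e" using main Kj e by linarith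
  then have "fcost j c'' \<le> cost c + e" using c''(4) \<open>0 \<le> tail c j\<close> by linarith
  then show ?thesis using c''(1) rj by (intro exI[of _ j] exI[of _ c'']) auto
qed

lemma opt:
  assumes pc: "prefix_code c" and sm: "summable (\<lambda>i. p i * \<phi> (length (c i)))"
  shows "M \<le> cost c"
proof (rule field_le_epsilon)
  fix e :: real assume e: "0 < e"
  obtain j c'' where j: "r \<le> j" "pf {..Suc j} c''" "fcost j c'' \<le> cost c + e"
    using approx[OF pc sm e] by blast
  obtain c3 where "pf {..Suc r} c3" "fcost r c3 \<le> fcost j c''"
    using chain[OF j(1)] j(2) by blast
  then show "M \<le> cost c + e" using M_le j(3) by (meson order_trans)
qed

end

context setting
begin

lemma phi_add: "a \<noteq> 1 \<Longrightarrow> \<phi> (m + n) = a ^ n * \<phi> m"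
  by (induction n) (simp_all add: phi_Suc)

lemma tail_sums: "(\<lambda>k. p (r + 1 + k) * \<phi> (Suc (m + k))) sums Tc r m"
proof (cases "a = 1")
  case False
  have eq: "p (r + 1 + k) * \<phi> (Suc (m + k)) = (p (r + 1 + k) * a ^ (k + 1)) * \<phi> m" for k
    using phi_add[OF False, of m "k + 1"] by simp
  have "(\<lambda>k. (p (r + 1 + k) * a ^ (k + 1)) * \<phi> m) sums (W r * \<phi> m)"
    unfolding W_def by (rule sums_mult2[OF summable_sums[OF Wser_summable]])
  moreover have "K r = 0" using False by (simp add: K_def)
  ultimately show ?thesis unfolding Tc_def eq by simp
next
  case True
  have ph: "\<phi> d = real d" for d unfolding \<phi>_def using True by simp
  have eq: "p (r + 1 + k) * \<phi> (Suc (m + k)) = p (r + 1 + k) * real m + p (r + 1 + k) * real (k + 1)" for k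
    unfolding ph by (simp add: algebra_simps)
  have s1: "(\<lambda>k. p (r + 1 + k) * real m) sums (W r * real m)"
  proof -
    have "(\<lambda>k. p (r + 1 + k) * a ^ (k + 1)) sums W r"
      unfolding W_def by (rule summable_sums[OF Wser_summable])
    then have "(\<lambda>k. p (r + 1 + k)) sums W r" using True by simp
    then show ?thesis by (rule sums_mult2)
  qed
  have s2: "(\<lambda>k. p (r + 1 + k) * real (k + 1)) sums K r"
  proof -
    have "K r = (\<Sum>k. p (r + 1 + k) * real (k + 1))" unfolding K_def using True by simp
    then show ?thesis using summable_sums[OF Kser_summable[OF True, of r]] by simp
  qed
  have fe: "(\<lambda>k. p (r + 1 + k) * \<phi> (Suc (m + k))) = (\<lambda>k. p (r + 1 + k) * real m + p (r + 1 + k) * real (k + 1))"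
    using eq by (intro ext)
  have te: "Tc r m = W r * real m + K r" unfolding Tc_def ph by simp
  show ?thesis unfolding fe te by (rule sums_add[OF s1 s2])
qed

lemma final_code:
  "\<exists>cf x. prefix_code cf \<and> summable (\<lambda>i. p i * \<phi> (length (cf i))) \<and> cost cf = M \<and>
      (\<forall>j. r < j \<longrightarrow> cf j = replicate (j - x) True @ [False])"
proof -
  obtain c0 where c0: "c0 \<in> SS" "fcost r c0 = M" using M_attained by blast
  define v where "v = c0 (Suc r)"
  define m where "m = length v"
  have mle: "m \<le> Suc r" using c0(1) unfolding SS_def Bnd_def m_def v_def by auto
  have pf0: "pf {..Suc r} c0" using c0(1) unfolding SS_def by simp
  define c1 where "c1 = (\<lambda>i. flipv v (c0 i))"
  have pf1: "pf {..Suc r} c1" unfolding c1_def by (rule pf_flip[OF pf0])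
  define R where "R = replicate m True"
  have c1r: "c1 (Suc r) = R" unfolding c1_def R_def m_def v_def by (rule flipv_self)
  have f1: "fcost r c1 = fcost r c0" unfolding fcost_def c1_def by (rule gcost_len_cong) simp
  define cf where "cf = (\<lambda>i. if i \<le> r then c1 i else replicate (m + (i - Suc r)) True @ [False])"
  define x where "x = Suc r - m"
  have form: "\<forall>j. r < j \<longrightarrow> cf j = replicate (j - x) True @ [False]"
  proof (intro allI impI)
    fix j assume "r < j"
    then have "j - x = m + (j - Suc r)" unfolding x_def using mle by simp
    then show "cf j = replicate (j - x) True @ [False]" unfolding cf_def using \<open>r < j\<close> by simp
  qed
  have npR: "\<not> prefix (c1 i) R \<and> \<not> prefix R (c1 i)" if "i \<le> r" for i
  proof -
    have "Suc r \<in> {..Suc r}" "i \<in> {..Suc r}" "i \<noteq> Suc r" using that by auto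
    then show ?thesis using pf1 c1r unfolding pf_def by metis
  qed
  have Rt: "prefix R (replicate (m + t) True @ [False])" for t
    unfolding R_def by (simp add: replicate_add)
  have pc: "prefix_code cf"
    unfolding prefix_code_def
  proof (intro allI impI)
    fix i k :: nat assume ik: "i \<noteq> k"
    show "\<not> prefix (cf i) (cf k)"
    proof (cases "i \<le> r")
      case True
      show ?thesis
      proof (cases "k \<le> r")
        case True2: True
        then show ?thesis using True ik pf1 unfolding cf_def pf_def by auto
      next
        case False
        show ?thesis
        proof
          assume P: "prefix (cf i) (cf k)"
          then have "prefix (c1 i) (replicate (m + (k - Suc r)) True @ [False])"
            using True False unfolding cf_def by simp
          then have "prefix (c1 i) R \<or> prefix R (c1 i)" using Rt prefix_same_cases by blast
          then show False using npR[OF True] by blast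
        qed
      qed
    next
      case False
      show ?thesis
      proof (cases "k \<le> r")
        case True
        show ?thesis
        proof
          assume P: "prefix (cf i) (cf k)"
          then have "prefix (replicate (m + (i - Suc r)) True @ [False]) (c1 k)"
            using True False unfolding cf_def by simp
          then have "prefix R (c1 k)" using Rt prefix_order.trans by blast
          then show False using npR[OF True] by blast
        qed
      next
        case False2: False
        show ?thesis
        proof
          assume P: "prefix (cf i) (cf k)"
          then have "prefix (replicate (m + (i - Suc r)) True @ [False]) (replicate (m + (k - Suc r)) True @ [False])"
            using False False2 unfolding cf_def by simp
          then have "m + (i - Suc r) = m + (k - Suc r)" by (rule unary_prefix)
          then show False using False False2 ik by simp
        qed
      qed
    qed
  qed
  let ?f = "\<lambda>i. p i * \<phi> (length (cf i))"
  have sh: "(\<lambda>n. ?f (n + Suc r)) = (\<lambda>k. p (r + 1 + k) * \<phi> (Suc (m + k)))"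
    unfolding cf_def by (simp add: fun_eq_iff add.commute)
  have "(\<lambda>n. ?f (n + Suc r)) sums Tc r m" unfolding sh by (rule tail_sums)
  then have fs: "?f sums (Tc r m + (\<Sum>i<Suc r. ?f i))" by (rule sums_iff_shift[where f="?f" and n="Suc r", THEN iffD1])
  have "(\<Sum>i<Suc r. ?f i) = (\<Sum>i\<le>r. p i * \<phi> (length (c1 i)))"
    unfolding lessThan_Suc_atMost cf_def by (intro sum.cong) auto
  moreover have "fcost r c1 = (\<Sum>i\<le>r. p i * \<phi> (length (c1 i))) + Tc r m"
    unfolding fcost_alt c1r R_def by simp
  ultimately have "cost cf = M" unfolding cost_def using sums_unique[OF fs] f1 c0(2) by simp
  then show ?thesis using pc form sums_summable[OF fs] by blast
qed

end

context setting
begin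

lemma penalty_opt:
  assumes pc: "prefix_code cf" and smf: "summable (\<lambda>i. p i * \<phi> (length (cf i)))"
    and copt: "\<And>c'. prefix_code c' \<Longrightarrow> summable (\<lambda>i. p i * \<phi> (length (c' i))) \<Longrightarrow> cost cf \<le> cost c'"
  shows "min_penalty_code a p cf"
  unfolding min_penalty_code_def
proof (intro conjI allI impI pc)
  fix c' assume pc': "prefix_code c'"
  show "penalty a p cf \<le> penalty a p c'"
  proof (cases "a = 1")
    case True
    have ph: "\<phi> d = real d" for d unfolding \<phi>_def using True by simp
    have nn: "0 \<le> p i * real (length (c i))" for i and c :: "nat \<Rightarrow> bool list" using pnn[of i] by simp
    have pen: "penalty a p c = enn2ereal (\<Sum>i. ennreal (p i * real (length (c i))))" for c
      unfolding penalty_def using True by simp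
    have smf': "summable (\<lambda>i. p i * real (length (cf i)))" using smf unfolding ph .
    have cfv: "penalty a p cf = ereal (cost cf)"
    proof -
      have "(\<Sum>i. ennreal (p i * real (length (cf i)))) = ennreal (cost cf)"
        unfolding cost_def ph by (rule suminf_ennreal2[OF nn[of _ cf] smf'])
      moreover have "0 \<le> cost cf" unfolding cost_def ph by (rule suminf_nonneg[OF smf' nn[of _ cf]])
      ultimately show ?thesis unfolding pen by simp
    qed
    show ?thesis
    proof (cases "summable (\<lambda>i. p i * real (length (c' i)))")
      case True
      have "(\<Sum>i. ennreal (p i * real (length (c' i)))) = ennreal (cost c')"
        unfolding cost_def ph by (rule suminf_ennreal2[OF nn[of _ c'] True])
      moreover have "0 \<le> cost c'" unfolding cost_def ph by (rule suminf_nonneg[OF True nn[of _ c']])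
      ultimately have "penalty a p c' = ereal (cost c')" unfolding pen by simp
      moreover have "cost cf \<le> cost c'" using copt[OF pc'] True unfolding ph by simp
      ultimately show ?thesis using cfv by simp
    next
      case False
      then have "(\<Sum>i. ennreal (p i * real (length (c' i)))) = top"
        using summable_suminf_not_top[where f="\<lambda>i. p i * real (length (c' i))", OF nn[of _ c']] by blast
      then show ?thesis unfolding pen[of c'] by simp
    qed
  next
    case a1: False
    have nn: "0 \<le> p i * a ^ length (c i)" for i and c :: "nat \<Rightarrow> bool list" by (rule term_nn)
    have pos: "0 < p i * a ^ length (c i)" for i and c :: "nat \<Rightarrow> bool list" using ppos[of i] apos by simp
    have pen: "penalty a p c = (let S = (\<Sum>i. ennreal (p i * a ^ length (c i)))
            in if S = \<infinity> then \<infinity> else ereal (log a (enn2real S)))" for c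
      unfolding penalty_def using a1 by simp
    have penf: "penalty a p c = ereal (log a (\<Sum>i. p i * a ^ length (c i)))"
      if s: "summable (\<lambda>i. p i * a ^ length (c i))" for c :: "nat \<Rightarrow> bool list"
    proof -
      have e: "(\<Sum>i. ennreal (p i * a ^ length (c i))) = ennreal (\<Sum>i. p i * a ^ length (c i))"
        by (rule suminf_ennreal2[OF nn[of _ c] s])
      have "0 \<le> (\<Sum>i. p i * a ^ length (c i))" by (rule suminf_nonneg[OF s nn[of _ c]])
      then show ?thesis unfolding pen e Let_def by simp
    qed
    have sumpos: "0 < (\<Sum>i. p i * a ^ length (c i))" if s: "summable (\<lambda>i. p i * a ^ length (c i))" for c :: "nat \<Rightarrow> bool list"
      by (rule suminf_pos[OF s pos[of _ c]])
    show ?thesis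
    proof (cases "1 < a")
      case True
      have ph: "\<phi> d = a ^ d" for d unfolding \<phi>_def using True by simp
      have smf': "summable (\<lambda>i. p i * a ^ length (cf i))" using smf unfolding ph .
      show ?thesis
      proof (cases "summable (\<lambda>i. p i * a ^ length (c' i))")
        case s': True
        have "cost cf \<le> cost c'" using copt[OF pc'] s' unfolding ph by simp
        then have "(\<Sum>i. p i * a ^ length (cf i)) \<le> (\<Sum>i. p i * a ^ length (c' i))"
          unfolding cost_def ph .
        then have "log a (\<Sum>i. p i * a ^ length (cf i)) \<le> log a (\<Sum>i. p i * a ^ length (c' i))"
          using True sumpos[OF smf'] sumpos[OF s'] by simp
        then show ?thesis using penf[OF smf'] penf[OF s'] by simp
      next
        case False
        then have "(\<Sum>i. ennreal (p i * a ^ length (c' i))) = top"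
          using summable_suminf_not_top[where f="\<lambda>i. p i * a ^ length (c' i)", OF nn[of _ c']] by blast
        then show ?thesis unfolding pen[of c'] Let_def by simp
      qed
    next
      case False
      then have alt: "a < 1" using a1 by simp
      have ph: "\<phi> d = - (a ^ d)" for d unfolding \<phi>_def using a1 False by simp
      have sall: "summable (\<lambda>i. p i * a ^ length (c i))" for c :: "nat \<Rightarrow> bool list"
      proof (rule summable_comparison_test'[where N=0, OF psummable])
        fix n
        have "a ^ length (c n) \<le> 1" using apos alt by (intro power_le_one) auto
        then have "p n * a ^ length (c n) \<le> p n * 1" using pnn by (intro mult_left_mono) auto
        then show "norm (p n * a ^ length (c n)) \<le> p n" using nn[of n c] by simp
      qed
      have costeq: "cost c = - (\<Sum>i. p i * a ^ length (c i))" for c :: "nat \<Rightarrow> bool list"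
        unfolding cost_def ph using suminf_minus[OF sall[of c]] by simp
      have small: "summable (\<lambda>i. p i * \<phi> (length (c i)))" for c :: "nat \<Rightarrow> bool list"
        unfolding ph using summable_minus[OF sall[of c]] by simp
      have "cost cf \<le> cost c'" using copt[OF pc' small] .
      then have le: "(\<Sum>i. p i * a ^ length (c' i)) \<le> (\<Sum>i. p i * a ^ length (cf i))"
        unfolding costeq by simp
      have "ln (\<Sum>i. p i * a ^ length (c' i)) \<le> ln (\<Sum>i. p i * a ^ length (cf i))"
        using le sumpos[OF sall] by simp
      moreover have "ln a < 0" using apos alt by simp
      ultimately have "ln (\<Sum>i. p i * a ^ length (cf i)) / ln a \<le> ln (\<Sum>i. p i * a ^ length (c' i)) / ln a"
        by (intro divide_right_mono_neg) auto
      then have "log a (\<Sum>i. p i * a ^ length (cf i)) \<le> log a (\<Sum>i. p i * a ^ length (c' i))"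
        unfolding log_def .
      then show ?thesis using penf[OF sall] penf[OF sall] by simp
    qed
  qed
qed

end

theorem theorem2:
  fixes p :: "nat \<Rightarrow> real" and a :: real and r :: nat
  assumes ppos: "\<And>i. p i > 0"
    and psum: "p sums 1"
    and apos: "a > 0"
    and cond: "\<And>i j. r < j \<Longrightarrow> i < j \<Longrightarrow>
        p i \<ge> p j \<and> ennreal (p i) \<ge> (\<Sum>k. ennreal (p (j + 1 + k) * a ^ (k + 1)))"
  shows "\<exists>c x. min_penalty_code a p c \<and>
           (\<forall>j. r < j \<longrightarrow> c j = replicate (j - x) True @ [False])"
proof -
  interpret S: setting p a r by (rule setting.intro[OF ppos psum apos cond])
  obtain cf x where cf: "prefix_code cf" "summable (\<lambda>i. p i * S.\<phi> (length (cf i)))" "S.cost cf = S.M"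
      "\<forall>j. r < j \<longrightarrow> cf j = replicate (j - x) True @ [False]"
    using S.final_code by blast
  have "min_penalty_code a p cf"
  proof (rule S.penalty_opt[OF cf(1,2)])
    fix c' assume "prefix_code c'" "summable (\<lambda>i. p i * S.\<phi> (length (c' i)))"
    then show "S.cost cf \<le> S.cost c'" using S.opt cf(3) by simp
  qed
  then show ?thesis using cf(4) by blast
qed


end
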